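(* Let $(X,d,\mu)$ be a coarse median space which is geodesic and has rank $1$. Then for any $\zeta,\varepsilon>0$ there exists a constant $\widetilde D=\widetilde D(\zeta,\varepsilon)$ such that for any $a,b\in X$ and any $(\zeta,\varepsilon)$-quasi-geodesic $\gamma\colon[s,t]\to X$ with $\gamma(s)=a$, $\gamma(t)=b$, the Hausdorff distance between the interval $[a,b]$ and $\mathrm{Im}(\gamma)$ is less than $\widetilde D$.
   Context: Write $x\sim_s y$ if $d(x,y)\leqslant s$. A coarse median space is a triple $(X,d,\mu)$ with $(X,d)$ a metric space and $\mu\colon X^3\to X$ satisfying: (M1) $\mu(a,a,b)=a$; (M2) $\mu(a_1,a_2,a_3)$ is invariant under permutations of its arguments; (C1) there is an affine $\rho(t)=Kt+H_0$ with $d(\mu(a,b,c),\mu(a',b',c'))\leqslant\rho(d(a,a')+d(b,b')+d(c,c'))$ for all points; (C2) there is $H\colon\mathbb N\to[0,\infty)$ such that for every finite $A\subseteq X$ with $1\leqslant|A|\leqslant p$ there are a finite median algebra $(\Pi,\mu_\Pi)$ and maps $\pi\colon A\to\Pi$, $\lambda\colon\Pi\to X$ with $\lambda\mu_\Pi(x,y,z)\sim_{H(p)}\mu(\lambda x,\lambda y,\lambda z)$ for all $x,y,z\in\Pi$ and $\lambda\pi a\sim_{H(p)}a$ for all $a\in A$. (A median algebra is a set with a ternary operation $m$ satisfying $m(a,a,b)=a$, full symmetry, and $m(m(a,b,c),b,d)=m(a,b,m(c,b,d))$.) The rank of a median algebra is the supremum of $n$ such that it contains a subalgebra isomorphic to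 $I^n=(\mathbb Z_2)^n$ with coordinatewise majority vote as median. The coarse median space has rank at most $n$ if there exist $\rho,H$ as in (C1),(C2) for which $\Pi$ in (C2) can always be chosen of rank at most $n$; its rank is the least such $n$. The interval is $[a,b]=\{\mu(a,y,b):y\in X\}$. A map $\gamma\colon[s,t]\to X$ is a $(\zeta,\varepsilon)$-quasi-geodesic if $\zeta^{-1}|u-v|-\varepsilon\leqslant d(\gamma(u),\gamma(v))\leqslant\zeta|u-v|+\varepsilon$ for all $u,v\in[s,t]$. *)

theory Defs
  imports "HOL-Analysis.Analysis" "HOL-Library.Extended_Real"
begin

definition median_algebra_on :: "'b set \<Rightarrow> ('b \<Rightarrow> 'b \<Rightarrow> 'b \<Rightarrow> 'b) \<Rightarrow> bool" where
  "median_algebra_on P m \<longleftrightarrow>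
     (\<forall>a\<in>P. \<forall>b\<in>P. \<forall>c\<in>P. m a b c \<in> P) \<and>
     (\<forall>a\<in>P. \<forall>b\<in>P. m a a b = a) \<and>
     (\<forall>a\<in>P. \<forall>b\<in>P. \<forall>c\<in>P. m a b c = m b a c \<and> m a b c = m a c b) \<and>
     (\<forall>a\<in>P. \<forall>b\<in>P. \<forall>c\<in>P. \<forall>d\<in>P. m (m a b c) b d = m a b (m c b d))"

definition cube :: "nat \<Rightarrow> bool list set" where
  "cube k = {xs. length xs = k}"

definition majority :: "bool list \<Rightarrow> bool list \<Rightarrow> bool list \<Rightarrow> bool list" where
  "majority xs ys zs = map (\<lambda>((a, b), c). (a \<and> b) \<or> (b \<and> c) \<or> (a \<and> c)) (zip (zip xs ys) zs)"

definition cube_embeds :: "'b set \<Rightarrow> ('b \<Rightarrow> 'b \<Rightarrow> 'b \<Rightarrow> 'b) \<Rightarrow> nat \<Rightarrow> bool" where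
  "cube_embeds P m k \<longleftrightarrow>
     (\<exists>f. inj_on f (cube k) \<and> f ` cube k \<subseteq> P \<and>
          (\<forall>x\<in>cube k. \<forall>y\<in>cube k. \<forall>z\<in>cube k. f (majority x y z) = m (f x) (f y) (f z)))"

definition median_rank_le :: "'b set \<Rightarrow> ('b \<Rightarrow> 'b \<Rightarrow> 'b \<Rightarrow> 'b) \<Rightarrow> nat \<Rightarrow> bool" where
  "median_rank_le P m n \<longleftrightarrow> (\<forall>k. cube_embeds P m k \<longrightarrow> k \<le> n)"

text \<open>The finite median algebra in (C2) is represented on a finite subset of nat
  (every finite median algebra is isomorphic to one of these).\<close>

definition coarse_median_rank_le :: "('a::metric_space \<Rightarrow> 'a \<Rightarrow> 'a \<Rightarrow> 'a) \<Rightarrow> nat \<Rightarrow> bool" where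
  "coarse_median_rank_le \<mu> n \<longleftrightarrow>
     (\<forall>a b. \<mu> a a b = a) \<and>
     (\<forall>a b c. \<mu> a b c = \<mu> b a c \<and> \<mu> a b c = \<mu> a c b \<and> \<mu> a b c = \<mu> b c a) \<and>
     (\<exists>K H0 (H :: nat \<Rightarrow> real).
        (\<forall>p. H p \<ge> 0) \<and>
        (\<forall>a b c a' b' c'. dist (\<mu> a b c) (\<mu> a' b' c')
              \<le> K * (dist a a' + dist b b' + dist c c') + H0) \<and>
        (\<forall>p A. finite A \<and> 1 \<le> card A \<and> card A \<le> p \<longrightarrow>
           (\<exists>(P :: nat set) m \<pi> lam. finite P \<and> median_algebra_on P m \<and> median_rank_le P m n \<and>
              \<pi> ` A \<subseteq> P \<and>
              (\<forall>x\<in>P. \<forall>y\<in>P. \<forall>z\<in>P. dist (lam (m x y z)) (\<mu> (lam x) (lam y) (lam z)) \<le> H p) \<and>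
              (\<forall>a\<in>A. dist (lam (\<pi> a)) a \<le> H p))))"

definition coarse_median_rank :: "('a::metric_space \<Rightarrow> 'a \<Rightarrow> 'a \<Rightarrow> 'a) \<Rightarrow> nat \<Rightarrow> bool" where
  "coarse_median_rank \<mu> n \<longleftrightarrow> coarse_median_rank_le \<mu> n \<and> (\<forall>k<n. \<not> coarse_median_rank_le \<mu> k)"

definition median_interval :: "('a \<Rightarrow> 'a \<Rightarrow> 'a \<Rightarrow> 'a) \<Rightarrow> 'a \<Rightarrow> 'a \<Rightarrow> 'a set" where
  "median_interval \<mu> a b = {\<mu> a y b | y. True}"

definition geodesic_space :: "'a::metric_space itself \<Rightarrow> bool" where
  "geodesic_space _ \<longleftrightarrow> (\<forall>x y::'a. \<exists>\<gamma>::real \<Rightarrow> 'a. \<gamma> 0 = x \<and> \<gamma> (dist x y) = y \<and>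
       (\<forall>u\<in>{0..dist x y}. \<forall>v\<in>{0..dist x y}. dist (\<gamma> u) (\<gamma> v) = \<bar>u - v\<bar>))"

definition quasi_geodesic :: "real \<Rightarrow> real \<Rightarrow> real \<Rightarrow> real \<Rightarrow> (real \<Rightarrow> 'a::metric_space) \<Rightarrow> bool" where
  "quasi_geodesic \<zeta> \<epsilon> s t \<gamma> \<longleftrightarrow>
     (\<forall>u\<in>{s..t}. \<forall>v\<in>{s..t}. \<bar>u - v\<bar> / \<zeta> - \<epsilon> \<le> dist (\<gamma> u) (\<gamma> v) \<and>
                             dist (\<gamma> u) (\<gamma> v) \<le> \<zeta> * \<bar>u - v\<bar> + \<epsilon>)"

definition hausdorff_distance :: "'a::metric_space set \<Rightarrow> 'a set \<Rightarrow> ereal" where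
  "hausdorff_distance A B =
     max (SUP a\<in>A. ereal (infdist a B)) (SUP b\<in>B. ereal (infdist b A))"

end

theory Submission
  imports Defs
begin


lemma cube2: "cube 2 = {[False,False],[False,True],[True,False],[True,True]}"
  by (auto simp: cube_def length_Suc_conv numeral_2_eq_2)

locale ma = fixes P :: "'b set" and m :: "'b \<Rightarrow> 'b \<Rightarrow> 'b \<Rightarrow> 'b"
  assumes cl: "\<And>a b c. a\<in>P \<Longrightarrow> b\<in>P \<Longrightarrow> c\<in>P \<Longrightarrow> m a b c \<in> P"
  and maj: "\<And>a b. a\<in>P \<Longrightarrow> b\<in>P \<Longrightarrow> m a a b = a"
  and s1: "\<And>a b c. a\<in>P \<Longrightarrow> b\<in>P \<Longrightarrow> c\<in>P \<Longrightarrow> m a b c = m b a c"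
  and s2: "\<And>a b c. a\<in>P \<Longrightarrow> b\<in>P \<Longrightarrow> c\<in>P \<Longrightarrow> m a b c = m a c b"
  and as: "\<And>a b c d. a\<in>P \<Longrightarrow> b\<in>P \<Longrightarrow> c\<in>P \<Longrightarrow> d\<in>P \<Longrightarrow> m (m a b c) b d = m a b (m c b d)"
begin

lemma pA:
  assumes "a\<in>P" "b\<in>P" "c\<in>P"
  shows "m a c b = m a b c" "m b a c = m a b c" "m b c a = m a b c" "m c a b = m a b c" "m c b a = m a b c"
proof -
  show 1: "m a c b = m a b c" using s2[OF assms] by simp
  show 2: "m b a c = m a b c" using s1[OF assms] by simp
  show 3: "m b c a = m a b c" using s1[OF assms] s2[OF assms(2,1,3)] by simp
  show 4: "m c a b = m a b c" using s2[OF assms] s1[OF assms(1,3,2)] by simp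
  show 5: "m c b a = m a b c" using 3 s1[OF assms(2,3,1)] by simp
qed

lemma maj2: "a\<in>P \<Longrightarrow> b\<in>P \<Longrightarrow> m a b a = a" "a\<in>P \<Longrightarrow> b\<in>P \<Longrightarrow> m b a a = a"
  using maj pA by metis+

lemma e1: assumes "a\<in>P" "b\<in>P" "y\<in>P" shows "m a (m a y b) b = m a y b"
proof -
  have "m a (m a y b) b = m (m a y b) a b" using pA assms cl by metis
  also have "\<dots> = m (m y a b) a b" using pA(2)[OF assms(1,3,2)] by simp
  also have "\<dots> = m y a (m b a b)" using as assms by blast
  also have "\<dots> = m y a b" using maj2 assms by simp
  also have "\<dots> = m a y b" using pA(2)[OF assms(1,3,2)] by simp
  finally show ?thesis .
qed
lemma e1': assumes "a\<in>P" "b\<in>P" "y\<in>P" shows "m a b (m a b y) = m a b y"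
proof -
  have "m a b (m a b y) = m a (m a y b) b" using pA(1)[OF assms(1,2,3)] pA(1)[OF assms(1,2) cl[OF assms]] by simp
  also have "\<dots> = m a y b" by (rule e1[OF assms])
  also have "\<dots> = m a b y" using pA(1)[OF assms(1,2,3)] by simp
  finally show ?thesis .
qed
lemma conv: assumes "a\<in>P" "b\<in>P" "x\<in>P" "w\<in>P" "m a x b = x" "m a w x = w" shows "m a w b = w"
  by (metis as assms(1,2,3,4,5,6) s1)
lemma med1: assumes "a\<in>P" "b\<in>P" "x\<in>P" "y\<in>P" "y'\<in>P" "m a x b = x" "m a y x = y" "m x y' b = y'"
  shows "m y x y' = x"
  by (metis as assms(1,2,3,4,5,6,7,8) maj s1 s2)

lemma stepI: assumes "a\<in>P" "b\<in>P" "x\<in>P" "c\<in>P" "m a x b = x"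
  shows "m x a (m b a c) = m x a c"
proof -
  have xab: "m x a b = x" using assms(5) pA(2)[OF assms(1,3,2)] by simp
  have "m (m x a b) a c = m x a (m b a c)" using as assms by blast
  thus ?thesis using xab by simp
qed

lemma sq1: assumes "a\<in>P" "b\<in>P" "x\<in>P" "c\<in>P" "m a x b = x"
  shows "m x (m a c x) (m a b c) = m a c x"
proof -
  define p where "p = m a x c"
  define r where "r = m a b c"
  have P: "p \<in> P" "r\<in>P" using cl assms p_def r_def by auto
  have p2: "m a c x = p" using p_def pA(1)[OF assms(1,3,4)] by simp
  have p3: "m c x a = p" using p_def pA(5)[OF assms(1,3,4)] by simp
  have r2: "m b a c = r" using r_def pA(2)[OF assms(1,2,4)] by simp
  have i1: "m a x r = p"
  proof -
    have "m x a (m b a c) = m x a c" using stepI assms by blast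
    thus ?thesis using r2 p_def pA(2)[OF assms(1,3) P(2)] pA(2)[OF assms(1,3,4)] by simp
  qed
  have "m p x r = m (m c x a) x r" using p3 by simp
  also have "\<dots> = m c x (m a x r)" using as assms P by blast
  also have "\<dots> = m c x p" using i1 by simp
  also have "\<dots> = m c x (m c x a)" using p3 by simp
  also have "\<dots> = m c x a" using e1' assms by blast
  also have "\<dots> = p" using p3 by simp
  finally have "m p x r = p" .
  hence "m x p r = p" using pA(2)[OF assms(3) P] by simp
  thus ?thesis using p2 r_def by simp
qed

lemma sq3: assumes "a\<in>P" "b\<in>P" "x\<in>P" "c\<in>P" "m a x b = x"
  shows "m (m a c x) x (m b c x) = x"
proof -
  have qP: "m b c x \<in> P" using cl assms by blast
  have "m c x (m c x b) = m c x b" using e1' assms by blast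
  hence q: "m c x (m b c x) = m b x c" using pA(3)[OF assms(2,4,3)] pA(1)[OF assms(2,3,4)] pA(4)[OF assms(2,3,4)] by simp
  have "m (m a c x) x (m b c x) = m (m a x c) x (m b c x)" using pA(1)[OF assms(1,3,4)] by simp
  also have "\<dots> = m a x (m c x (m b c x))" using as assms qP by blast
  also have "\<dots> = m a x (m b x c)" using q by simp
  also have "\<dots> = m (m a x b) x c" using as assms by metis
  also have "\<dots> = x" using assms maj by simp
  finally show ?thesis .
qed

lemma pin: assumes "a\<in>P" "b\<in>P" "x\<in>P" "c\<in>P" "m a x b = x"
  shows "m a (m a c x) (m a b c) = m a c x"
proof -
  have xr: "m x a (m b a c) = m x a c" using stepI assms by blast
  have rP: "m b a c \<in> P" using cl assms by blast
  have e: "m a (m a c x) (m a b c) = m (m c a x) a (m b a c)"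
    using pA(2)[OF assms(1,4,3)] pA(2)[OF assms(1,2,4)] pA(2)[OF assms(1) cl[OF assms(4,1,3)] rP] by simp
  have "m a (m a c x) (m a b c) = m (m c a x) a (m b a c)" by (rule e)
  also have "\<dots> = m c a (m x a (m b a c))" using as assms rP by blast
  also have "\<dots> = m c a (m x a c)" using xr by simp
  also have "\<dots> = m c a (m c a x)" using pA(5)[OF assms(4,1,3)] by simp
  also have "\<dots> = m c a x" using e1' assms by blast
  also have "\<dots> = m a c x" using pA(2)[OF assms(1,4,3)] by simp
  finally show ?thesis .
qed

lemma sq4: assumes "a\<in>P" "b\<in>P" "x\<in>P" "c\<in>P" "m a x b = x"
  shows "m (m a c x) (m a b c) (m b c x) = m a b c"
proof -
  have r: "m a (m a b c) b = m a b c" using e1[OF assms(1,2,4)] pA(1)[OF assms(1,2,4)] by simp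
  have p: "m a (m a c x) (m a b c) = m a c x" using pin assms by blast
  have "m b x a = x" using assms pA(5)[OF assms(1,3,2)] by simp
  hence "m b (m b c x) (m b a c) = m b c x" using pin assms by blast
  hence q: "m (m a b c) (m b c x) b = m b c x"
    using pA(2)[OF assms(1,2,4)] pA(4)[OF assms(2) cl[OF assms(2,4,3)] cl[OF assms(2,1,4)]] pA(1)[OF cl[OF assms(1,2,4)] assms(2) cl[OF assms(2,4,3)]] by simp
  show ?thesis using med1[OF assms(1,2) cl[OF assms(1,2,4)] cl[OF assms(1,4,3)] cl[OF assms(2,4,3)] r p q] .
qed

lemma sq2: assumes "a\<in>P" "b\<in>P" "x\<in>P" "c\<in>P" "m a x b = x"
  shows "m x (m b c x) (m a b c) = m b c x"
proof -
  have "m b x a = x" using assms pA(5)[OF assms(1,3,2)] by simp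
  hence "m x (m b c x) (m b a c) = m b c x" using sq1 assms by blast
  thus ?thesis using pA(2)[OF assms(1,2,4)] by simp
qed

lemma square_embeds:
  assumes P: "x\<in>P" "p\<in>P" "r\<in>P" "q\<in>P"
    and S1: "m x p r = p" and S2: "m x q r = q" and S3: "m p x q = x" and S4: "m p r q = r"
    and D: "x\<noteq>p" "x\<noteq>q" "x\<noteq>r" "p\<noteq>q" "p\<noteq>r" "q\<noteq>r"
  shows "cube_embeds P m 2"
proof -
  define f where "f = (\<lambda>l::bool list. if l = [False,False] then x else if l = [False,True] then p
     else if l = [True,True] then r else q)"
  have inj: "inj_on f (cube 2)" unfolding cube2 inj_on_def f_def using D by auto
  have img: "f ` cube 2 \<subseteq> P" unfolding cube2 f_def using P by auto
  have hom: "\<forall>u\<in>cube 2. \<forall>v\<in>cube 2. \<forall>w\<in>cube 2. f (majority u v w) = m (f u) (f v) (f w)"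
    unfolding cube2 f_def
    using pA[OF P(1,2,3)] pA[OF P(1,4,3)] pA[OF P(2,1,4)] pA[OF P(2,3,4)] S1 S2 S3 S4 maj maj2 P
    by (simp add: majority_def)
  show ?thesis unfolding cube_embeds_def using inj img hom by blast
qed

lemma R1:
  assumes rk: "median_rank_le P m 1" and A: "a\<in>P" "b\<in>P" "x\<in>P" "c\<in>P" and xab: "m a x b = x"
  shows "m a c x = x \<or> m b c x = x"
proof (rule ccontr)
  assume N: "\<not> (m a c x = x \<or> m b c x = x)"
  define p where "p = m a c x"
  define q where "q = m b c x"
  define r where "r = m a b c"
  have P: "x\<in>P" "p\<in>P" "r\<in>P" "q\<in>P" using A cl p_def q_def r_def by auto
  have S1: "m x p r = p" using sq1[OF A xab] p_def r_def by simp
  have S2: "m x q r = q" using sq2[OF A xab] q_def r_def by simp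
  have S3: "m p x q = x" using sq3[OF A xab] p_def q_def by simp
  have S4: "m p r q = r" using sq4[OF A xab] p_def q_def r_def by simp
  have d1: "x \<noteq> p" "x \<noteq> q" using N p_def q_def by auto
  have d3: "x \<noteq> r"
  proof
    assume "x = r"
    hence "p = m a c (m a c b)" using p_def r_def pA(1)[OF A(1,2,4)] by simp
    also have "\<dots> = m a c b" using e1' A by blast
    also have "\<dots> = x" using \<open>x = r\<close> r_def pA(1)[OF A(1,2,4)] by simp
    finally show False using d1 by simp
  qed
  have d4: "p \<noteq> q"
  proof
    assume "p = q" hence "m p x p = x" using S3 by simp
    thus False using maj2 P d1 by metis
  qed
  have d5: "p \<noteq> r"
  proof
    assume "p = r" hence "m x q p = q" using S2 by simp
    moreover have "m x q p = m p x q" using pA(3)[OF P(2,1,4)] by simp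
    ultimately show False using S3 d1 by simp
  qed
  have d6: "q \<noteq> r"
  proof
    assume "q = r" hence "m x p q = p" using S1 by simp
    moreover have "m x p q = m p x q" using pA(2)[OF P(2,1,4)] by simp
    ultimately show False using S3 d1 by simp
  qed
  have "cube_embeds P m 2" using square_embeds[OF P S1 S2 S3 S4 d1 d3 d4 d5 d6] .
  with rk show False unfolding median_rank_le_def by fastforce
qed

end



lemma ma_of: assumes "median_algebra_on P m" shows "ma P m"
proof
  show "\<And>a b c. a\<in>P \<Longrightarrow> b\<in>P \<Longrightarrow> c\<in>P \<Longrightarrow> m a b c \<in> P" using assms unfolding median_algebra_on_def by blast
  show "\<And>a b. a\<in>P \<Longrightarrow> b\<in>P \<Longrightarrow> m a a b = a" using assms unfolding median_algebra_on_def by blast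
  show "\<And>a b c. a\<in>P \<Longrightarrow> b\<in>P \<Longrightarrow> c\<in>P \<Longrightarrow> m a b c = m b a c" using assms unfolding median_algebra_on_def by blast
  show "\<And>a b c. a\<in>P \<Longrightarrow> b\<in>P \<Longrightarrow> c\<in>P \<Longrightarrow> m a b c = m a c b" using assms unfolding median_algebra_on_def by blast
  show "\<And>a b c d. a\<in>P \<Longrightarrow> b\<in>P \<Longrightarrow> c\<in>P \<Longrightarrow> d\<in>P \<Longrightarrow> m (m a b c) b d = m a b (m c b d)" using assms unfolding median_algebra_on_def by blast
qed

locale cm =
  fixes \<mu> :: "'a::metric_space \<Rightarrow> 'a \<Rightarrow> 'a \<Rightarrow> 'a" and K H0 :: real and H :: "nat \<Rightarrow> real"
  assumes mm: "\<And>a b. \<mu> a a b = a"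
  and ms1: "\<And>a b c. \<mu> a b c = \<mu> b a c"
  and ms2: "\<And>a b c. \<mu> a b c = \<mu> a c b"
  and K0: "0 \<le> K" and H00: "0 \<le> H0"
  and lip: "\<And>a b c a' b' c'. dist (\<mu> a b c) (\<mu> a' b' c') \<le> K*(dist a a' + dist b b' + dist c c') + H0"
  and Hnn: "\<And>p. 0 \<le> H p"
  and apx: "\<And>p A. finite A \<Longrightarrow> 1 \<le> card A \<Longrightarrow> card A \<le> p \<Longrightarrow>
     \<exists>(P::nat set) m \<pi> lam. median_algebra_on P m \<and> median_rank_le P m 1 \<and> \<pi> ` A \<subseteq> P \<and>
       (\<forall>x\<in>P. \<forall>y\<in>P. \<forall>z\<in>P. dist (lam (m x y z)) (\<mu> (lam x) (lam y) (lam z)) \<le> H p) \<and>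
       (\<forall>a\<in>A. dist (lam (\<pi> a)) a \<le> H p)"
begin

lemma mperm: "\<mu> a c b = \<mu> a b c" "\<mu> b a c = \<mu> a b c" "\<mu> b c a = \<mu> a b c" "\<mu> c a b = \<mu> a b c" "\<mu> c b a = \<mu> a b c"
proof -
  show 1: "\<mu> a c b = \<mu> a b c" using ms2[of a b c] by simp
  show 2: "\<mu> b a c = \<mu> a b c" using ms1[of a b c] by simp
  show 3: "\<mu> b c a = \<mu> a b c" using ms1[of a b c] ms2[of b a c] by simp
  show 4: "\<mu> c a b = \<mu> a b c" using ms2[of a b c] ms1[of a c b] by simp
  show 5: "\<mu> c b a = \<mu> a b c" using 3 ms1[of b c a] by simp
qed

lemma mm2: "\<mu> a b a = a" "\<mu> b a a = a"
proof -
  show "\<mu> a b a = a" using mm[of a b] mperm(1)[of a a b] by simp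
  have "\<mu> b a a = \<mu> a a b" by (rule mperm(4))
  thus "\<mu> b a a = a" using mm[of a b] by simp
qed

lemma L1: "dist (\<mu> a b c) a \<le> K * dist a b + H0"
proof -
  have "dist (\<mu> a b c) (\<mu> a a c) \<le> K*(dist a a + dist b a + dist c c) + H0" by (rule lip)
  thus ?thesis using mm by (simp add: dist_commute)
qed

lemma apx_list:
  assumes "length xs \<le> p" "xs \<noteq> []"
  shows "\<exists>(P::nat set) m \<pi> lam. ma P m \<and> median_rank_le P m 1 \<and> (\<forall>a\<in>set xs. \<pi> a \<in> P) \<and>
       (\<forall>x\<in>P. \<forall>y\<in>P. \<forall>z\<in>P. dist (lam (m x y z)) (\<mu> (lam x) (lam y) (lam z)) \<le> H p) \<and>
       (\<forall>a\<in>set xs. dist (lam (\<pi> a)) a \<le> H p)"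
proof -
  have "card (set xs) \<le> p" using card_length assms(1) le_trans by blast
  moreover have "1 \<le> card (set xs)" using assms(2) by (simp add: Suc_leI card_gt_0_iff)
  ultimately have ex: "\<exists>(P::nat set) m \<pi> lam. median_algebra_on P m \<and> median_rank_le P m 1 \<and> \<pi> ` set xs \<subseteq> P \<and>
       (\<forall>x\<in>P. \<forall>y\<in>P. \<forall>z\<in>P. dist (lam (m x y z)) (\<mu> (lam x) (lam y) (lam z)) \<le> H p) \<and>
       (\<forall>a\<in>set xs. dist (lam (\<pi> a)) a \<le> H p)" by (intro apx) auto
  then obtain P m \<pi> lam where X: "median_algebra_on (P::nat set) m \<and> median_rank_le P m 1 \<and> \<pi> ` set xs \<subseteq> P \<and>
       (\<forall>x\<in>P. \<forall>y\<in>P. \<forall>z\<in>P. dist (lam (m x y z)) (\<mu> (lam x) (lam y) (lam z)) \<le> H p) \<and>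
       (\<forall>a\<in>set xs. dist (lam (\<pi> a)) a \<le> H p)" by (elim exE) (rule that, assumption)
  have A1: "median_algebra_on P m" and A2: "median_rank_le P m 1" and A3: "\<pi> ` set xs \<subseteq> P"
    and A4: "(\<forall>x\<in>P. \<forall>y\<in>P. \<forall>z\<in>P. dist (lam (m x y z)) (\<mu> (lam x) (lam y) (lam z)) \<le> H p)"
    and A5: "(\<forall>a\<in>set xs. dist (lam (\<pi> a)) a \<le> H p)" using X by simp_all
  have A3': "\<forall>a\<in>set xs. \<pi> a \<in> P" using A3 by auto
  show ?thesis
    apply (rule exI[where x=P], rule exI[where x=m], rule exI[where x=\<pi>], rule exI[where x=lam])
    using ma_of[OF A1] A2 A3' A4 A5 by (intro conjI)
qed

lemma tr2:
  assumes hom: "\<forall>x\<in>P. \<forall>y\<in>P. \<forall>z\<in>P. dist (lam (m x y z)) (\<mu> (lam x) (lam y) (lam z)) \<le> h"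
    and P: "x\<in>P" "y\<in>P" "z\<in>P"
    and d: "dist (lam x) A \<le> u" "dist (lam y) B \<le> v" "dist (lam z) C \<le> w"
  shows "dist (lam (m x y z)) (\<mu> A B C) \<le> h + K*(u+v+w) + H0"
proof -
  have "dist (lam (m x y z)) (\<mu> A B C) \<le> dist (lam (m x y z)) (\<mu> (lam x) (lam y) (lam z)) + dist (\<mu> (lam x) (lam y) (lam z)) (\<mu> A B C)"
    by (rule dist_triangle)
  also have "\<dots> \<le> h + (K*(dist (lam x) A + dist (lam y) B + dist (lam z) C) + H0)"
    using hom P lip[of "lam x" "lam y" "lam z" A B C] by (intro add_mono) auto
  also have "\<dots> \<le> h + (K*(u+v+w) + H0)" using d K0 by (simp add: mult_left_mono)
  finally show ?thesis by simp
qed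

lemma cR1: "\<exists>Cr\<ge>0. \<forall>a b c y. dist (\<mu> a y b) (\<mu> a (\<mu> a y b) c) \<le> Cr \<or> dist (\<mu> a y b) (\<mu> c (\<mu> a y b) b) \<le> Cr"
proof -
  define h where "h = H 4"
  define e where "e = h + K*(h+h+h) + H0"
  define Cr where "Cr = e + (h + K*(h+h+e) + H0)"
  have h0: "0 \<le> h" using Hnn h_def by simp
  have e0: "0 \<le> e" using e_def h0 K0 H00 by simp
  have "\<forall>a b c y. dist (\<mu> a y b) (\<mu> a (\<mu> a y b) c) \<le> Cr \<or> dist (\<mu> a y b) (\<mu> c (\<mu> a y b) b) \<le> Cr"
  proof (intro allI)
    fix a b c y
    obtain P m \<pi> lam where ma: "ma (P::nat set) m" and rk: "median_rank_le P m 1" and inP: "\<forall>z\<in>set [a,b,c,y]. \<pi> z \<in> P"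
      and hom: "\<forall>x\<in>P. \<forall>y\<in>P. \<forall>z\<in>P. dist (lam (m x y z)) (\<mu> (lam x) (lam y) (lam z)) \<le> h"
      and clo: "\<forall>z\<in>set [a,b,c,y]. dist (lam (\<pi> z)) z \<le> h"
      using apx_list[of "[a,b,c,y]" 4] h_def by auto
    interpret ma P m by (rule ma)
    define x where "x = \<mu> a y b"
    define xo where "xo = m (\<pi> a) (\<pi> y) (\<pi> b)"
    have Po: "\<pi> a \<in> P" "\<pi> b \<in> P" "\<pi> c \<in> P" "\<pi> y \<in> P" using inP by auto
    have xoP: "xo \<in> P" using xo_def Po by (simp add: ma.cl[OF ma])
    have dx: "dist (lam xo) x \<le> e" unfolding xo_def x_def e_def
      by (rule tr2[OF hom Po(1,4,2)]) (use clo in auto)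
    have xin: "m (\<pi> a) xo (\<pi> b) = xo" unfolding xo_def using e1 Po by blast
    have "m (\<pi> a) (\<pi> c) xo = xo \<or> m (\<pi> b) (\<pi> c) xo = xo" using R1[OF rk Po(1,2) xoP Po(3) xin] .
    thus "dist x (\<mu> a x c) \<le> Cr \<or> dist x (\<mu> c x b) \<le> Cr"
    proof
      assume E: "m (\<pi> a) (\<pi> c) xo = xo"
      have "dist (lam (m (\<pi> a) (\<pi> c) xo)) (\<mu> a c x) \<le> h + K*(h+h+e) + H0"
        by (rule tr2[OF hom Po(1,3) xoP]) (use clo dx in auto)
      hence "dist (lam xo) (\<mu> a x c) \<le> h + K*(h+h+e) + H0" using E mperm by simp
      hence "dist x (\<mu> a x c) \<le> Cr" using dist_triangle[of x "\<mu> a x c" "lam xo"] dx Cr_def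
        by (simp add: dist_commute)
      thus ?thesis by simp
    next
      assume E: "m (\<pi> b) (\<pi> c) xo = xo"
      have "dist (lam (m (\<pi> b) (\<pi> c) xo)) (\<mu> b c x) \<le> h + K*(h+h+e) + H0"
        by (rule tr2[OF hom Po(2,3) xoP]) (use clo dx in auto)
      hence "dist (lam xo) (\<mu> c x b) \<le> h + K*(h+h+e) + H0" using E mperm by metis
      hence "dist x (\<mu> c x b) \<le> Cr" using dist_triangle[of x "\<mu> c x b" "lam xo"] dx Cr_def
        by (simp add: dist_commute)
      thus ?thesis by simp
    qed
  qed
  moreover have "0 \<le> Cr" using Cr_def e0 h0 K0 H00 by simp
  ultimately show ?thesis by blast
qed

lemma cConv: "\<exists>C2\<ge>0. \<forall>a b y y'. dist (\<mu> a y' (\<mu> a y b)) (\<mu> a (\<mu> a y' (\<mu> a y b)) b) \<le> C2"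
proof -
  define h where "h = H 4"
  define e where "e = h + K*(h+h+h) + H0"
  define e2 where "e2 = h + K*(h+h+e) + H0"
  define e3 where "e3 = h + K*(h+e2+h) + H0"
  have h0: "0 \<le> h" using Hnn h_def by simp
  have e0: "0 \<le> e" using e_def h0 K0 H00 by simp
  have e20: "0 \<le> e2" using e2_def h0 e0 K0 H00 by simp
  have e30: "0 \<le> e3" using e3_def h0 e20 K0 H00 by simp
  have "\<forall>a b y y'. dist (\<mu> a y' (\<mu> a y b)) (\<mu> a (\<mu> a y' (\<mu> a y b)) b) \<le> e2 + e3"
  proof (intro allI)
    fix a b y y'
    obtain P m \<pi> lam where ma: "ma (P::nat set) m" and rk: "median_rank_le P m 1" and inP: "\<forall>z\<in>set [a,b,y,y']. \<pi> z \<in> P"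
      and hom: "\<forall>x\<in>P. \<forall>y\<in>P. \<forall>z\<in>P. dist (lam (m x y z)) (\<mu> (lam x) (lam y) (lam z)) \<le> h"
      and clo: "\<forall>z\<in>set [a,b,y,y']. dist (lam (\<pi> z)) z \<le> h"
      using apx_list[of "[a,b,y,y']" 4] h_def by auto
    define x where "x = \<mu> a y b"
    define w where "w = \<mu> a y' x"
    define xo where "xo = m (\<pi> a) (\<pi> y) (\<pi> b)"
    define wo where "wo = m (\<pi> a) (\<pi> y') xo"
    have Po: "\<pi> a \<in> P" "\<pi> b \<in> P" "\<pi> y \<in> P" "\<pi> y' \<in> P" using inP by auto
    have xoP: "xo \<in> P" using xo_def Po by (simp add: ma.cl[OF ma])
    have woP: "wo \<in> P" using wo_def Po xoP by (simp add: ma.cl[OF ma])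
    have dx: "dist (lam xo) x \<le> e" unfolding xo_def x_def e_def
      by (rule tr2[OF hom Po(1,3,2)]) (use clo in auto)
    have dw: "dist (lam wo) w \<le> e2" unfolding wo_def w_def e2_def
      by (rule tr2[OF hom Po(1,4) xoP]) (use clo dx in auto)
    have xin: "m (\<pi> a) xo (\<pi> b) = xo" unfolding xo_def using ma.e1[OF ma] Po by blast
    have win: "m (\<pi> a) wo xo = wo" unfolding wo_def using ma.e1[OF ma] Po xoP by blast
    have E: "m (\<pi> a) wo (\<pi> b) = wo" using ma.conv[OF ma Po(1,2) xoP woP xin win] .
    have "dist (lam (m (\<pi> a) wo (\<pi> b))) (\<mu> a w b) \<le> e3" unfolding e3_def
      by (rule tr2[OF hom Po(1) woP Po(2)]) (use clo dw in auto)
    hence "dist (lam wo) (\<mu> a w b) \<le> e3" using E by simp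
    hence "dist w (\<mu> a w b) \<le> e2 + e3" using dist_triangle[of w "\<mu> a w b" "lam wo"] dw
      by (simp add: dist_commute)
    thus "dist (\<mu> a y' (\<mu> a y b)) (\<mu> a (\<mu> a y' (\<mu> a y b)) b) \<le> e2 + e3" using w_def x_def by simp
  qed
  moreover have "0 \<le> e2 + e3" using e20 e30 by simp
  ultimately show ?thesis by blast
qed

lemma cMed1: "\<exists>C3\<ge>0. \<forall>a b w w' w''. dist (\<mu> a w b) (\<mu> (\<mu> a w' (\<mu> a w b)) (\<mu> a w b) (\<mu> (\<mu> a w b) w'' b)) \<le> C3"
proof -
  define h where "h = H 5"
  define e where "e = h + K*(h+h+h) + H0"
  define e2 where "e2 = h + K*(h+h+e) + H0"
  define e4 where "e4 = h + K*(e2+e+e2) + H0"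
  have h0: "0 \<le> h" using Hnn h_def by simp
  have e0: "0 \<le> e" using e_def h0 K0 H00 by simp
  have e20: "0 \<le> e2" using e2_def h0 e0 K0 H00 by simp
  have e40: "0 \<le> e4" using e4_def e0 h0 e20 K0 H00 by simp
  have "\<forall>a b w w' w''. dist (\<mu> a w b) (\<mu> (\<mu> a w' (\<mu> a w b)) (\<mu> a w b) (\<mu> (\<mu> a w b) w'' b)) \<le> e + e4"
  proof (intro allI)
    fix a b w w' w''
    obtain P m \<pi> lam where ma: "ma (P::nat set) m" and rk: "median_rank_le P m 1" and inP: "\<forall>z\<in>set [a,b,w,w',w'']. \<pi> z \<in> P"
      and hom: "\<forall>x\<in>P. \<forall>y\<in>P. \<forall>z\<in>P. dist (lam (m x y z)) (\<mu> (lam x) (lam y) (lam z)) \<le> h"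
      and clo: "\<forall>z\<in>set [a,b,w,w',w'']. dist (lam (\<pi> z)) z \<le> h"
      using apx_list[of "[a,b,w,w',w'']" 5] h_def by auto
    define x where "x = \<mu> a w b"
    define y where "y = \<mu> a w' x"
    define y' where "y' = \<mu> x w'' b"
    define xo where "xo = m (\<pi> a) (\<pi> w) (\<pi> b)"
    define yo where "yo = m (\<pi> a) (\<pi> w') xo"
    define yo' where "yo' = m xo (\<pi> w'') (\<pi> b)"
    have Po: "\<pi> a \<in> P" "\<pi> b \<in> P" "\<pi> w \<in> P" "\<pi> w' \<in> P" "\<pi> w'' \<in> P" using inP by auto
    have xoP: "xo \<in> P" using xo_def Po by (simp add: ma.cl[OF ma])
    have yoP: "yo \<in> P" using yo_def Po xoP by (simp add: ma.cl[OF ma])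
    have yoP': "yo' \<in> P" using yo'_def Po xoP by (simp add: ma.cl[OF ma])
    have dx: "dist (lam xo) x \<le> e" unfolding xo_def x_def e_def
      by (rule tr2[OF hom Po(1,3,2)]) (use clo in auto)
    have dy: "dist (lam yo) y \<le> e2" unfolding yo_def y_def e2_def
      by (rule tr2[OF hom Po(1,4) xoP]) (use clo dx in auto)
    have dy': "dist (lam yo') y' \<le> e2"
    proof -
      have "dist (lam yo') y' \<le> h + K*(e+h+h) + H0" unfolding yo'_def y'_def
        by (rule tr2[OF hom xoP Po(5,2)]) (use clo dx in auto)
      thus ?thesis unfolding e2_def by (simp add: algebra_simps)
    qed
    have xin: "m (\<pi> a) xo (\<pi> b) = xo" unfolding xo_def using ma.e1[OF ma] Po by blast
    have yin: "m (\<pi> a) yo xo = yo" unfolding yo_def using ma.e1[OF ma] Po xoP by blast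
    have yin': "m xo yo' (\<pi> b) = yo'" unfolding yo'_def using ma.e1[OF ma] Po xoP by blast
    have E: "m yo xo yo' = xo" using ma.med1[OF ma Po(1,2) xoP yoP yoP' xin yin yin'] .
    have "dist (lam (m yo xo yo')) (\<mu> y x y') \<le> e4" unfolding e4_def
      by (rule tr2[OF hom yoP xoP yoP']) (use dy dx dy' in auto)
    hence "dist (lam xo) (\<mu> y x y') \<le> e4" using E by simp
    hence "dist x (\<mu> y x y') \<le> e + e4" using dist_triangle[of x "\<mu> y x y'" "lam xo"] dx
      by (simp add: dist_commute)
    thus "dist (\<mu> a w b) (\<mu> (\<mu> a w' (\<mu> a w b)) (\<mu> a w b) (\<mu> (\<mu> a w b) w'' b)) \<le> e + e4"
      using x_def y_def y'_def by simp
  qed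
  moreover have "0 \<le> e + e4" using e0 e40 by simp
  ultimately show ?thesis by blast
qed

end



lemma infdist_near: assumes "A \<noteq> {}" "infdist x A < e" shows "\<exists>a\<in>A. dist x a < e"
proof -
  have "(INF a\<in>A. dist x a) < e" using assms(2) infdist_notempty[OF assms(1), of x] by simp
  moreover have "bdd_below ((\<lambda>a. dist x a) ` A)" by (rule bdd_belowI[of _ 0]) auto
  ultimately show ?thesis using cINF_less_iff[OF assms(1)] by blast
qed

lemma sq_le_pow: "k \<ge> 4 \<Longrightarrow> k*k \<le> (2::nat)^k"
proof (induction k rule: dec_induct)
  case base then show ?case by simp
next
  case (step n)
  have "Suc n * Suc n = n*n + 2*n + 1" by simp
  also have "\<dots> \<le> n*n + n*n"
  proof -
    have "4*n \<le> n*n" using step(1) by (rule mult_le_mono1)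
    thus ?thesis using step(1) by linarith
  qed
  also have "\<dots> \<le> 2^n + 2^n" using step(3) by simp
  finally show ?case by simp
qed

lemma exp_bound: fixes c1 c2 :: real assumes "0 \<le> c1" "0 \<le> c2" shows "\<exists>N. \<forall>k::nat. real (2^k) \<le> c1*k + c2 \<longrightarrow> k \<le> N"
proof (intro exI allI impI)
  fix k :: nat assume k: "real (2^k) \<le> c1*k + c2"
  show "k \<le> max 4 (nat \<lceil>c1 + c2\<rceil>)"
  proof (rule ccontr)
    assume "\<not> ?thesis"
    hence k4: "k \<ge> 4" and kc: "real k > c1 + c2" by linarith+
    have "real (k*k) \<le> real (2^k)" using sq_le_pow[OF k4] by linarith
    also have "\<dots> \<le> c1*k + c2" by (rule k)
    also have "\<dots> \<le> c1*k + c2*k" using k4 assms by (simp add: mult_left_mono[of 1 "real k" c2, simplified])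
    also have "\<dots> = (c1+c2)*k" by (simp add: algebra_simps)
    also have "\<dots> < real k * k" using kc k4 by (intro mult_strict_right_mono) auto
    finally show False by simp
  qed
qed

lemma geod: assumes "geodesic_space TYPE('a::metric_space)"
  shows "\<exists>g::real\<Rightarrow>'a. g 0 = x \<and> g (dist x y) = y \<and> (\<forall>u\<in>{0..dist x y}. \<forall>v\<in>{0..dist x y}. dist (g u) (g v) = \<bar>u - v\<bar>)"
  using assms unfolding geodesic_space_def by blast

lemma qg_up: "quasi_geodesic \<zeta> \<epsilon> s t \<gamma> \<Longrightarrow> u\<in>{s..t} \<Longrightarrow> v\<in>{s..t} \<Longrightarrow> dist (\<gamma> u) (\<gamma> v) \<le> \<zeta>*\<bar>u-v\<bar> + \<epsilon>"
  unfolding quasi_geodesic_def by blast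

lemma qg_low: assumes "quasi_geodesic \<zeta> \<epsilon> s t \<gamma>" "u\<in>{s..t}" "v\<in>{s..t}" "0 < \<zeta>"
  shows "\<bar>u-v\<bar> \<le> \<zeta>*(dist (\<gamma> u) (\<gamma> v) + \<epsilon>)"
proof -
  have "\<bar>u-v\<bar>/\<zeta> \<le> dist (\<gamma> u) (\<gamma> v) + \<epsilon>" using assms unfolding quasi_geodesic_def by force
  thus ?thesis using assms(4) by (simp add: divide_le_eq mult.commute)
qed

context cm begin

lemma LL:
  assumes Cr0: "0 \<le> Cr" and Cr: "\<forall>a b c y. dist (\<mu> a y b) (\<mu> a (\<mu> a y b) c) \<le> Cr \<or> dist (\<mu> a y b) (\<mu> c (\<mu> a y b) b) \<le> Cr"
    and Lp: "0 \<le> Lp"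
    and g: "\<forall>r\<in>{\<alpha>0..\<beta>0}. \<forall>r'\<in>{\<alpha>0..\<beta>0}. dist (g r) (g r') \<le> Lp*\<bar>r-r'\<bar> + E"
  shows "\<forall>\<alpha> \<beta> w. \<alpha>0 \<le> \<alpha> \<longrightarrow> \<alpha> \<le> \<beta> \<longrightarrow> \<beta> \<le> \<beta>0 \<longrightarrow> \<beta> - \<alpha> \<le> 2^k \<longrightarrow>
     (\<exists>r\<in>{\<alpha>..\<beta>}. dist (\<mu> (g \<alpha>) w (g \<beta>)) (g r) \<le> Cr*real k + K*(Lp+E) + H0)"
proof (induction k)
  case 0
  show ?case
  proof (intro allI impI)
    fix \<alpha> \<beta> w assume h: "\<alpha>0 \<le> \<alpha>" "\<alpha> \<le> \<beta>" "\<beta> \<le> \<beta>0" "\<beta> - \<alpha> \<le> 2^0"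
    have "\<alpha> \<in> {\<alpha>0..\<beta>0}" "\<beta> \<in> {\<alpha>0..\<beta>0}" using h by auto
    hence "dist (g \<alpha>) (g \<beta>) \<le> Lp*\<bar>\<alpha>-\<beta>\<bar> + E" using g by blast
    also have "\<dots> \<le> Lp + E" using h Lp by (simp add: mult_left_le)
    finally have d: "dist (g \<alpha>) (g \<beta>) \<le> Lp + E" .
    have "dist (\<mu> (g \<alpha>) w (g \<beta>)) (g \<alpha>) = dist (\<mu> (g \<alpha>) (g \<beta>) w) (g \<alpha>)" using mperm(1) by metis
    also have "\<dots> \<le> K * dist (g \<alpha>) (g \<beta>) + H0" by (rule L1)
    also have "\<dots> \<le> K*(Lp+E) + H0" using d K0 by (simp add: mult_left_mono)
    finally show "\<exists>r\<in>{\<alpha>..\<beta>}. dist (\<mu> (g \<alpha>) w (g \<beta>)) (g r) \<le> Cr*real 0 + K*(Lp+E) + H0"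
      using h by (intro bexI[of _ \<alpha>]) auto
  qed
next
  case (Suc k)
  show ?case
  proof (intro allI impI)
    fix \<alpha> \<beta> w assume h: "\<alpha>0 \<le> \<alpha>" "\<alpha> \<le> \<beta>" "\<beta> \<le> \<beta>0" "\<beta> - \<alpha> \<le> 2^Suc k"
    define c where "c = (\<alpha>+\<beta>)/2"
    define x where "x = \<mu> (g \<alpha>) w (g \<beta>)"
    have c: "\<alpha> \<le> c" "c \<le> \<beta>" "c - \<alpha> \<le> 2^k" "\<beta> - c \<le> 2^k" using h c_def by auto
    from Cr[rule_format, of "g \<alpha>" w "g \<beta>" "g c"]
    have "dist x (\<mu> (g \<alpha>) x (g c)) \<le> Cr \<or> dist x (\<mu> (g c) x (g \<beta>)) \<le> Cr" unfolding x_def .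
    thus "\<exists>r\<in>{\<alpha>..\<beta>}. dist (\<mu> (g \<alpha>) w (g \<beta>)) (g r) \<le> Cr*real (Suc k) + K*(Lp+E) + H0"
    proof
      assume A: "dist x (\<mu> (g \<alpha>) x (g c)) \<le> Cr"
      have "c \<le> \<beta>0" using c h by linarith
      then obtain r where r: "r\<in>{\<alpha>..c}" "dist (\<mu> (g \<alpha>) x (g c)) (g r) \<le> Cr*real k + K*(Lp+E) + H0"
        using Suc.IH[rule_format, of \<alpha> c x] h(1) c(1,3) by blast
      have "dist x (g r) \<le> Cr + (Cr*real k + K*(Lp+E) + H0)"
        using dist_triangle[of x "g r" "\<mu> (g \<alpha>) x (g c)"] A r by linarith
      thus ?thesis using r c unfolding x_def by (intro bexI[of _ r]) (auto simp: algebra_simps)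
    next
      assume A: "dist x (\<mu> (g c) x (g \<beta>)) \<le> Cr"
      have "\<alpha>0 \<le> c" using c h by linarith
      then obtain r where r: "r\<in>{c..\<beta>}" "dist (\<mu> (g c) x (g \<beta>)) (g r) \<le> Cr*real k + K*(Lp+E) + H0"
        using Suc.IH[rule_format, of c \<beta> x] h(3) c(2,4) by blast
      have "dist x (g r) \<le> Cr + (Cr*real k + K*(Lp+E) + H0)"
        using dist_triangle[of x "g r" "\<mu> (g c) x (g \<beta>)"] A r by linarith
      thus ?thesis using r c unfolding x_def by (intro bexI[of _ r]) (auto simp: algebra_simps)
    qed
  qed
qed

end


context cm begin

lemma leg:
  assumes geo: "geodesic_space TYPE('a)"
    and T0: "0 \<le> T" and S': "\<forall>w. infdist (\<mu> e w x) G \<le> S'" and eG: "e \<in> G"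
  shows "\<exists>w1 z. z \<in> G \<and> dist (\<mu> e w1 x) z \<le> S' + 1 \<and> dist x (\<mu> e w1 x) \<le> T + K + H0 \<and>
            (\<mu> e w1 x = z \<or> T \<le> dist x (\<mu> e w1 x))"
proof (cases "dist x e \<le> T")
  case True
  have "\<mu> e e x = e" by (rule mm)
  moreover have "0 \<le> S'" using S' infdist_nonneg order_trans by blast
  ultimately show ?thesis using True eG K0 H00 by (intro exI[of _ e] exI[of _ e]) (auto simp: dist_commute)
next
  case False
  obtain g :: "real \<Rightarrow> 'a" where g0: "g 0 = x" and gl: "g (dist x e) = e"
    and gi: "\<forall>u\<in>{0..dist x e}. \<forall>v\<in>{0..dist x e}. dist (g u) (g v) = \<bar>u - v\<bar>"
    using geod[OF geo, of x e] by blast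
  define l where "l = dist x e"
  define zf where "zf = (\<lambda>j::nat. \<mu> e (g (min (real j) l)) x)"
  define Pj where "Pj = (\<lambda>j. T \<le> dist x (zf j))"
  have PN: "Pj (nat \<lceil>l\<rceil>)"
  proof -
    have "min (real (nat \<lceil>l\<rceil>)) l = l" by linarith
    hence "zf (nat \<lceil>l\<rceil>) = \<mu> e e x" using zf_def gl l_def by simp
    hence "zf (nat \<lceil>l\<rceil>) = e" using mm by simp
    thus ?thesis using False Pj_def by simp
  qed
  define j0 where "j0 = (LEAST j. Pj j)"
  have Pj0: "Pj j0" using PN j0_def by (metis LeastI)
  have zfb: "dist x (zf j0) \<le> T + K + H0"
  proof (cases "j0 = 0")
    case True
    have "zf 0 = x" using zf_def g0 mm2(2)[of e x] l_def by simp
    thus ?thesis using True T0 K0 H00 by simp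
  next
    case False
    hence "\<not> Pj (j0 - 1)" using j0_def by (metis diff_less less_numeral_extra(1) not_less_Least not_gr0)
    hence lt: "dist x (zf (j0-1)) < T" using Pj_def by simp
    have l0: "0 \<le> l" using l_def by simp
    have r1: "min (real j0) l \<in> {0..dist x e}" "min (real (j0-1)) l \<in> {0..dist x e}" using l0 l_def by auto
    have "\<bar>min (real j0) l - min (real (j0-1)) l\<bar> \<le> 1" using False by (simp add: of_nat_diff)
    hence gd: "dist (g (min (real (j0-1)) l)) (g (min (real j0) l)) \<le> 1" using gi r1 by (simp add: abs_minus_commute)
    have "dist (zf (j0-1)) (zf j0) \<le> K*(dist e e + dist (g (min (real (j0-1)) l)) (g (min (real j0) l)) + dist x x) + H0"
      unfolding zf_def by (rule lip)
    also have "\<dots> \<le> K*1 + H0" using gd K0 by (simp add: mult_left_le)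
    finally have "dist (zf (j0-1)) (zf j0) \<le> K + H0" by simp
    thus ?thesis using lt dist_triangle[of x "zf j0" "zf (j0-1)"] by linarith
  qed
  have "infdist (zf j0) G < S' + 1" using S' zf_def by (meson add_strict_left_mono less_add_one order_le_less_trans)
  then obtain z where z: "z \<in> G" "dist (zf j0) z < S' + 1" using infdist_near eG by blast
  show ?thesis
    apply (rule exI[of _ "g (min (real j0) l)"], rule exI[of _ z])
    using z zfb Pj0 unfolding zf_def Pj_def by auto
qed

end


context cm begin

lemma core:
  assumes geo: "geodesic_space TYPE('a)"
  and Cr0: "0 \<le> Cr" and Cr: "\<forall>a b c y. dist (\<mu> a y b) (\<mu> a (\<mu> a y b) c) \<le> Cr \<or> dist (\<mu> a y b) (\<mu> c (\<mu> a y b) b) \<le> Cr"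
  and C20: "0 \<le> C2" and C2: "\<forall>a b y y'. dist (\<mu> a y' (\<mu> a y b)) (\<mu> a (\<mu> a y' (\<mu> a y b)) b) \<le> C2"
  and C30: "0 \<le> C3" and C3: "\<forall>a b w w' w''. dist (\<mu> a w b) (\<mu> (\<mu> a w' (\<mu> a w b)) (\<mu> a w b) (\<mu> (\<mu> a w b) w'' b)) \<le> C3"
  and z: "0 < \<zeta>" "0 < \<epsilon>" and qg: "quasi_geodesic \<zeta> \<epsilon> s t \<gamma>" and st: "s \<le> t"
  and Sb: "\<forall>x\<in>median_interval \<mu> (\<gamma> s) (\<gamma> t). infdist x (\<gamma>`{s..t}) \<le> S" and S0: "0 \<le> S"
  and xI: "x \<in> median_interval \<mu> (\<gamma> s) (\<gamma> t)" and xS: "S - 1 < infdist x (\<gamma>`{s..t})"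
  and k: "(S + C2 + 1) + \<zeta>*(6*S + 2*C2 + 6 + 2*K + 2*H0 + \<epsilon>) \<le> 2^k"
  shows "S - 1 - C2 \<le> C3 + 2*Cr + Cr*real k + (K*(1+\<zeta>+\<epsilon>) + H0)"
proof -
  define a where "a = \<gamma> s"
  define b where "b = \<gamma> t"
  define G where "G = \<gamma>`{s..t}"
  define I where "I = median_interval \<mu> a b"
  define T where "T = 2*S + 2"
  define Q where "Q = K*(1+\<zeta>+\<epsilon>) + H0"
  define LB where "LB = S - 1 - C2"
  obtain w0 where x: "x = \<mu> a w0 b" using xI unfolding median_interval_def a_def b_def by blast
  have Ga: "a \<in> G" and Gb: "b \<in> G" using st a_def b_def G_def by auto
  have SbI: "\<And>v. v \<in> I \<Longrightarrow> infdist v G \<le> S" using Sb I_def a_def b_def G_def by blast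
  have inI: "\<And>y. \<mu> a y b \<in> I" unfolding I_def median_interval_def by blast
  have sideA: "\<forall>w. infdist (\<mu> a w x) G \<le> S + C2"
  proof
    fix w
    have d: "dist (\<mu> a w x) (\<mu> a (\<mu> a w x) b) \<le> C2" using C2[rule_format, of a w w0 b] x by simp
    have "infdist (\<mu> a w x) G \<le> infdist (\<mu> a (\<mu> a w x) b) G + dist (\<mu> a w x) (\<mu> a (\<mu> a w x) b)"
      by (rule infdist_triangle)
    thus "infdist (\<mu> a w x) G \<le> S + C2" using SbI[OF inI] d by smt
  qed
  have xb: "x = \<mu> b w0 a" using x mperm(5) by simp
  have sideB: "\<forall>w. infdist (\<mu> b w x) G \<le> S + C2"
  proof
    fix w
    have d: "dist (\<mu> b w x) (\<mu> b (\<mu> b w x) a) \<le> C2" using C2[rule_format, of b w w0 a] xb by simp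
    have e: "\<mu> b (\<mu> b w x) a = \<mu> a (\<mu> b w x) b" using mperm(5) by simp
    have "infdist (\<mu> b w x) G \<le> infdist (\<mu> b (\<mu> b w x) a) G + dist (\<mu> b w x) (\<mu> b (\<mu> b w x) a)"
      by (rule infdist_triangle)
    thus "infdist (\<mu> b w x) G \<le> S + C2" using SbI[OF inI] d e by smt
  qed
  have T0: "0 \<le> T" using T_def S0 by simp
  obtain w1 z1 where z1: "z1 \<in> G" "dist (\<mu> a w1 x) z1 \<le> S + C2 + 1" "dist x (\<mu> a w1 x) \<le> T + K + H0"
     "\<mu> a w1 x = z1 \<or> T \<le> dist x (\<mu> a w1 x)"
    using leg[OF geo T0 sideA Ga] by blast
  obtain w2 z2 where z2: "z2 \<in> G" "dist (\<mu> b w2 x) z2 \<le> S + C2 + 1" "dist x (\<mu> b w2 x) \<le> T + K + H0"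
     "\<mu> b w2 x = z2 \<or> T \<le> dist x (\<mu> b w2 x)"
    using leg[OF geo T0 sideB Gb] by blast
  define y where "y = \<mu> a w1 x"
  define y' where "y' = \<mu> b w2 x"
  obtain u1 where u1: "u1 \<in> {s..t}" "z1 = \<gamma> u1" using z1(1) G_def by blast
  obtain u2 where u2: "u2 \<in> {s..t}" "z2 = \<gamma> u2" using z2(1) G_def by blast
  define x1 where "x1 = \<mu> y x y'"
  have dx1: "dist x x1 \<le> C3"
  proof -
    have "\<mu> x w2 b = y'" using y'_def mperm(5) by simp
    thus ?thesis using C3[rule_format, of a w0 b w1 w2] x x1_def y_def by simp
  qed
  have xG: "\<And>v. v \<in> G \<Longrightarrow> S - 1 < dist x v"
    using xS infdist_le G_def by (metis order_less_le_trans)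
  have lbG: "\<And>v. v\<in>{s..t} \<Longrightarrow> LB \<le> dist x (\<gamma> v)"
    using xG G_def LB_def C20 by fastforce
  obtain h1 :: "real \<Rightarrow> 'a" where h10: "h1 0 = y" and h1l: "h1 (dist y z1) = z1"
    and h1i: "\<forall>u\<in>{0..dist y z1}. \<forall>v\<in>{0..dist y z1}. dist (h1 u) (h1 v) = \<bar>u - v\<bar>"
    using geod[OF geo, of y z1] by blast
  obtain h2 :: "real \<Rightarrow> 'a" where h20: "h2 0 = z2" and h2l: "h2 (dist z2 y') = y'"
    and h2i: "\<forall>u\<in>{0..dist z2 y'}. \<forall>v\<in>{0..dist z2 y'}. dist (h2 u) (h2 v) = \<bar>u - v\<bar>"
    using geod[OF geo, of z2 y'] by blast
  have lb1: "\<And>r. r\<in>{0..dist y z1} \<Longrightarrow> LB \<le> dist x (h1 r)"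
  proof -
    fix r assume r: "r\<in>{0..dist y z1}"
    show "LB \<le> dist x (h1 r)"
    proof (cases "y = z1")
      case True
      hence "r = 0" using r by simp
      thus ?thesis using h10 True xG z1(1) LB_def C20 by fastforce
    next
      case False
      hence Tl: "T \<le> dist x y" using z1(4) y_def by simp
      have "dist y (h1 r) = r" using h1i r h10 by (metis abs_of_nonneg atLeastAtMost_iff diff_0 abs_minus_cancel dist_self order_refl zero_le_dist)
      moreover have "dist x y \<le> dist x (h1 r) + dist y (h1 r)" by (metis dist_commute dist_triangle)
      ultimately show ?thesis using Tl r z1(2) y_def T_def LB_def by simp
    qed
  qed
  have lb2: "\<And>r. r\<in>{0..dist z2 y'} \<Longrightarrow> LB \<le> dist x (h2 r)"
  proof -
    fix r assume r: "r\<in>{0..dist z2 y'}"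
    show "LB \<le> dist x (h2 r)"
    proof (cases "y' = z2")
      case True
      hence "r = 0" using r by simp
      thus ?thesis using h20 True xG z2(1) LB_def C20 by fastforce
    next
      case False
      hence Tl: "T \<le> dist x y'" using z2(4) y'_def by simp
      have "dist (h2 r) y' = dist z2 y' - r" using h2i[rule_format, of r "dist z2 y'"] r h2l by auto
      moreover have "dist x y' \<le> dist x (h2 r) + dist (h2 r) y'" by (rule dist_triangle)
      ultimately show ?thesis using Tl r z2(2) y'_def T_def LB_def by (simp add: dist_commute)
    qed
  qed
  have l1: "dist y z1 \<le> 2^k" using z1(2) y_def k z S0 C20 K0 H00 by (smt (verit) mult_nonneg_nonneg)
  have l2: "dist z2 y' \<le> 2^k" using z2(2) y'_def k z S0 C20 K0 H00 by (smt (verit) dist_commute mult_nonneg_nonneg)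
  have l3: "\<bar>u1 - u2\<bar> \<le> 2^k"
  proof -
    have "dist z1 z2 \<le> dist z1 y + dist y x + dist x y' + dist y' z2"
      by (metis add.assoc dist_triangle order_trans add_le_cancel_right)
    also have "\<dots> \<le> 2*(S + C2 + 1) + 2*(T + K + H0)"
      using z1(2,3) z2(2,3) y_def y'_def by (simp add: dist_commute)
    finally have dz: "dist z1 z2 \<le> 2*(S + C2 + 1) + 2*(T + K + H0)" .
    have "\<bar>u1 - u2\<bar> \<le> \<zeta>*(dist z1 z2 + \<epsilon>)" using qg_low[OF qg u1(1) u2(1) z(1)] u1 u2 by simp
    also have "\<dots> \<le> \<zeta>*(2*(S + C2 + 1) + 2*(T + K + H0) + \<epsilon>)" using dz z by simp
    also have "\<dots> = \<zeta>*(6*S + 2*C2 + 6 + 2*K + 2*H0 + \<epsilon>)" using T_def by (simp add: algebra_simps)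
    also have "\<dots> \<le> 2^k" using k S0 C20 by linarith
    finally show ?thesis .
  qed
  have Q1: "Cr*real k + K*(1+0) + H0 \<le> Cr*real k + Q" using Q_def K0 z mult_left_mono[of 1 "1+\<zeta>+\<epsilon>" K] by simp
  have Q2: "Cr*real k + K*(\<zeta>+\<epsilon>) + H0 \<le> Cr*real k + Q" using Q_def K0 z mult_left_mono[of "\<zeta>+\<epsilon>" "1+\<zeta>+\<epsilon>" K] by simp
  have main: "\<exists>p. LB \<le> dist x p \<and> dist x p \<le> C3 + 2*Cr + Cr*real k + Q"
  proof -
    from Cr[rule_format, of y x y' z1]
    have "dist x1 (\<mu> y x1 z1) \<le> Cr \<or> dist x1 (\<mu> z1 x1 y') \<le> Cr" unfolding x1_def .
    thus ?thesis
    proof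
      assume A: "dist x1 (\<mu> y x1 z1) \<le> Cr"
      have g1: "\<forall>r\<in>{0..dist y z1}. \<forall>r'\<in>{0..dist y z1}. dist (h1 r) (h1 r') \<le> 1*\<bar>r-r'\<bar> + 0" using h1i by simp
      obtain r where r: "r\<in>{0..dist y z1}" "dist (\<mu> (h1 0) x1 (h1 (dist y z1))) (h1 r) \<le> Cr*real k + K*(1+0) + H0"
        using LL[OF Cr0 Cr _ g1, of k, rule_format, of 0 "dist y z1" x1] l1 by auto
      have "dist x (h1 r) \<le> dist x x1 + dist x1 (\<mu> y x1 z1) + dist (\<mu> y x1 z1) (h1 r)"
        by (metis dist_triangle order_trans add_right_mono)
      hence "dist x (h1 r) \<le> C3 + 2*Cr + Cr*real k + Q" using dx1 A r h10 h1l Q1 Cr0 by simp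
      thus ?thesis using lb1[OF r(1)] by blast
    next
      assume B: "dist x1 (\<mu> z1 x1 y') \<le> Cr"
      define x2 where "x2 = \<mu> z1 x1 y'"
      from Cr[rule_format, of z1 x1 y' z2]
      have "dist x2 (\<mu> z1 x2 z2) \<le> Cr \<or> dist x2 (\<mu> z2 x2 y') \<le> Cr" unfolding x2_def .
      thus ?thesis
      proof
        assume B1: "dist x2 (\<mu> z1 x2 z2) \<le> Cr"
        define lo where "lo = min u1 u2"
        define hi where "hi = max u1 u2"
        have lohi: "s \<le> lo" "lo \<le> hi" "hi \<le> t" "hi - lo \<le> 2^k" using u1 u2 l3 lo_def hi_def by auto
        have e: "\<mu> (\<gamma> lo) x2 (\<gamma> hi) = \<mu> z1 x2 z2"
          using u1 u2 lo_def hi_def mperm(5) by (cases "u1 \<le> u2") auto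
        have gg: "\<forall>r\<in>{s..t}. \<forall>r'\<in>{s..t}. dist (\<gamma> r) (\<gamma> r') \<le> \<zeta>*\<bar>r-r'\<bar> + \<epsilon>" using qg_up[OF qg] by blast
        obtain r where r: "r\<in>{lo..hi}" "dist (\<mu> (\<gamma> lo) x2 (\<gamma> hi)) (\<gamma> r) \<le> Cr*real k + K*(\<zeta>+\<epsilon>) + H0"
          using LL[OF Cr0 Cr _ gg, of k, rule_format, of lo hi x2] lohi z by auto
        have "dist x (\<gamma> r) \<le> dist x x1 + dist x1 x2 + dist x2 (\<mu> z1 x2 z2) + dist (\<mu> z1 x2 z2) (\<gamma> r)"
          by (metis dist_triangle order_trans add_right_mono)
        hence "dist x (\<gamma> r) \<le> C3 + 2*Cr + Cr*real k + Q" using dx1 B B1 r e Q2 x2_def by simp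
        moreover have "r \<in> {s..t}" using r lohi by auto
        ultimately show ?thesis using lbG by blast
      next
        assume B2: "dist x2 (\<mu> z2 x2 y') \<le> Cr"
        have g2: "\<forall>r\<in>{0..dist z2 y'}. \<forall>r'\<in>{0..dist z2 y'}. dist (h2 r) (h2 r') \<le> 1*\<bar>r-r'\<bar> + 0" using h2i by simp
        obtain r where r: "r\<in>{0..dist z2 y'}" "dist (\<mu> (h2 0) x2 (h2 (dist z2 y'))) (h2 r) \<le> Cr*real k + K*(1+0) + H0"
          using LL[OF Cr0 Cr _ g2, of k, rule_format, of 0 "dist z2 y'" x2] l2 by auto
        have "dist x (h2 r) \<le> dist x x1 + dist x1 x2 + dist x2 (\<mu> z2 x2 y') + dist (\<mu> z2 x2 y') (h2 r)"
          by (metis dist_triangle order_trans add_right_mono)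
        hence "dist x (h2 r) \<le> C3 + 2*Cr + Cr*real k + Q" using dx1 B B2 r h20 h2l Q1 x2_def by simp
        thus ?thesis using lb2[OF r(1)] by blast
      qed
    qed
  qed
  thus ?thesis using LB_def Q_def by auto
qed

end


context cm begin

lemma partB:
  assumes geo: "geodesic_space TYPE('a)"
  and Cr0: "0 \<le> Cr" and Cr: "\<forall>a b c y. dist (\<mu> a y b) (\<mu> a (\<mu> a y b) c) \<le> Cr \<or> dist (\<mu> a y b) (\<mu> c (\<mu> a y b) b) \<le> Cr"
  and C20: "0 \<le> C2" and C2: "\<forall>a b y y'. dist (\<mu> a y' (\<mu> a y b)) (\<mu> a (\<mu> a y' (\<mu> a y b)) b) \<le> C2"
  and C30: "0 \<le> C3" and C3: "\<forall>a b w w' w''. dist (\<mu> a w b) (\<mu> (\<mu> a w' (\<mu> a w b)) (\<mu> a w b) (\<mu> (\<mu> a w b) w'' b)) \<le> C3"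
  and z: "0 < \<zeta>" "0 < \<epsilon>"
  shows "\<exists>M\<ge>0. \<forall>a b s t \<gamma>. s \<le> t \<and> quasi_geodesic \<zeta> \<epsilon> s t \<gamma> \<and> \<gamma> s = a \<and> \<gamma> t = b \<longrightarrow>
            (\<forall>x\<in>median_interval \<mu> a b. infdist x (\<gamma>`{s..t}) \<le> M)"
proof -
  define Q where "Q = K*(1+\<zeta>+\<epsilon>) + H0"
  define A0 where "A0 = 1 + C2 + C3 + 2*Cr + Q"
  define \<alpha>1 where "\<alpha>1 = 1 + 6*\<zeta>"
  define \<beta>1 where "\<beta>1 = (C2+1) + \<zeta>*(2*C2 + 6 + 2*K + 2*H0 + \<epsilon>)"
  define c1 where "c1 = 2*\<alpha>1*Cr"
  define c2 where "c2 = 1 + 2*(\<alpha>1*A0 + \<beta>1)"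
  have Q0: "0 \<le> Q" using Q_def K0 H00 z by simp
  have A00: "0 \<le> A0" using A0_def C20 C30 Cr0 Q0 by simp
  have a10: "0 \<le> \<alpha>1" using \<alpha>1_def z by simp
  have b10: "0 \<le> \<beta>1" using \<beta>1_def z C20 K0 H00 by simp
  have c10: "0 \<le> c1" using c1_def a10 Cr0 by simp
  have c20: "1 \<le> c2" using c2_def a10 A00 b10 by simp
  obtain N where N: "\<forall>k::nat. real (2^k) \<le> c1*k + c2 \<longrightarrow> k \<le> N" using exp_bound[OF c10] c20 by fastforce
  define M where "M = A0 + Cr*N"
  have M0: "0 \<le> M" using M_def A00 Cr0 by simp
  have "\<forall>a b s t \<gamma>. s \<le> t \<and> quasi_geodesic \<zeta> \<epsilon> s t \<gamma> \<and> \<gamma> s = a \<and> \<gamma> t = b \<longrightarrow>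
            (\<forall>x\<in>median_interval \<mu> a b. infdist x (\<gamma>`{s..t}) \<le> M)"
  proof (intro allI impI)
    fix a b :: 'a and s t :: real and \<gamma> :: "real \<Rightarrow> 'a" assume H: "s \<le> t \<and> quasi_geodesic \<zeta> \<epsilon> s t \<gamma> \<and> \<gamma> s = a \<and> \<gamma> t = b"
    hence st: "s \<le> t" and qg: "quasi_geodesic \<zeta> \<epsilon> s t \<gamma>" and ga: "\<gamma> s = a" and gb: "\<gamma> t = b" by auto
    define G where "G = \<gamma>`{s..t}"
    define I where "I = median_interval \<mu> a b"
    define f where "f = (\<lambda>x. infdist x G)"
    have "a = \<mu> a a b \<and> True" using mm[of a b] by simp
    hence aI: "a \<in> I" unfolding I_def median_interval_def by blast
    hence Ine: "I \<noteq> {}" by auto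
    obtain k0 :: nat where k0: "t - s < 2^k0" using real_arch_pow[of 2 "t-s"] by auto
    have gg: "\<forall>r\<in>{s..t}. \<forall>r'\<in>{s..t}. dist (\<gamma> r) (\<gamma> r') \<le> \<zeta>*\<bar>r-r'\<bar> + \<epsilon>" using qg_up[OF qg] by blast
    have bdd: "bdd_above (f ` I)"
    proof (rule bdd_aboveI2)
      fix x assume "x \<in> I"
      then obtain w where w: "x = \<mu> a w b" unfolding I_def median_interval_def by blast
      obtain r where r: "r\<in>{s..t}" "dist (\<mu> (\<gamma> s) w (\<gamma> t)) (\<gamma> r) \<le> Cr*real k0 + K*(\<zeta>+\<epsilon>) + H0"
        using LL[OF Cr0 Cr _ gg, of k0, rule_format, of s t w] st k0 z by auto
      have "f x \<le> dist x (\<gamma> r)" unfolding f_def G_def using r(1) by (simp add: infdist_le)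
      thus "f x \<le> Cr*real k0 + K*(\<zeta>+\<epsilon>) + H0" using r w ga gb by simp
    qed
    define S where "S = Sup (f ` I)"
    have Sb: "\<forall>x\<in>I. f x \<le> S" using cSUP_upper[OF _ bdd] S_def by blast
    have S0: "0 \<le> S" using Sb aI f_def infdist_nonneg order_trans by blast
    obtain x where xI: "x \<in> I" and xS: "S - 1 < f x"
      using less_cSUP_iff[OF Ine bdd, of "S - 1"] S_def by auto
    define \<Phi> where "\<Phi> = (S + C2 + 1) + \<zeta>*(6*S + 2*C2 + 6 + 2*K + 2*H0 + \<epsilon>)"
    have Phi: "\<Phi> = \<alpha>1*S + \<beta>1" unfolding \<Phi>_def \<alpha>1_def \<beta>1_def by (simp add: algebra_simps)
    have exk: "\<exists>k::nat. \<Phi> \<le> 2^k" using real_arch_pow[of 2 \<Phi>] by (auto intro: less_imp_le)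
    define k where "k = (LEAST k::nat. \<Phi> \<le> 2^k)"
    have kk: "\<Phi> \<le> 2^k" using exk k_def by (metis LeastI_ex)
    have "S - 1 - C2 \<le> C3 + 2*Cr + Cr*real k + (K*(1+\<zeta>+\<epsilon>) + H0)"
      by (rule core[OF geo Cr0 Cr C20 C2 C30 C3 z qg st _ S0 _ _ kk[unfolded \<Phi>_def]])
         (use Sb xI xS ga gb in \<open>auto simp: I_def f_def G_def\<close>)
    hence SA: "S \<le> A0 + Cr*real k" unfolding A0_def Q_def by simp
    have "real (2^k) \<le> c1*k + c2"
    proof (cases "k = 0")
      case True thus ?thesis using c20 by simp
    next
      case False
      hence "\<not> \<Phi> \<le> 2^(k-1)" using k_def not_less_Least[of "k-1" "\<lambda>k. \<Phi> \<le> 2^k"] by auto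
      hence "2^(k-1) < \<Phi>" by simp
      hence "2*2^(k-1) < 2*\<Phi>" by simp
      moreover have "(2::real)*2^(k-1) = 2^k" using False by (metis power_Suc Suc_pred' neq0_conv)
      ultimately have "2^k < 2*\<Phi>" by simp
      also have "\<dots> \<le> 2*(\<alpha>1*(A0 + Cr*real k) + \<beta>1)" using Phi SA a10 by (simp add: mult_left_mono)
      also have "\<dots> \<le> c1*k + c2" unfolding c1_def c2_def by (simp add: algebra_simps)
      finally show ?thesis by simp
    qed
    hence "k \<le> N" using N by blast
    hence "S \<le> M" using SA M_def Cr0 by (smt (verit) mult_left_mono of_nat_le_iff)
    thus "\<forall>x\<in>median_interval \<mu> a b. infdist x (\<gamma>`{s..t}) \<le> M"
      using Sb I_def f_def G_def by fastforce
  qed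
  thus ?thesis using M0 by blast
qed

lemma partA:
  assumes geo: "geodesic_space TYPE('a)" and z: "0 < \<zeta>" "0 < \<epsilon>" and M0: "0 \<le> M"
    and qg: "quasi_geodesic \<zeta> \<epsilon> s t \<gamma>" and st: "s \<le> t" and ga: "\<gamma> s = a" and gb: "\<gamma> t = b"
    and Mb: "\<forall>x\<in>median_interval \<mu> a b. infdist x (\<gamma>`{s..t}) \<le> M"
  shows "\<forall>u\<in>{s..t}. infdist (\<gamma> u) (median_interval \<mu> a b) \<le> \<zeta>*(\<zeta>*(2*(M+1)+K+H0+\<epsilon>)) + \<epsilon> + M + 1"
proof
  fix u assume u: "u \<in> {s..t}"
  define I where "I = median_interval \<mu> a b"
  define G where "G = \<gamma>`{s..t}"
  define DA where "DA = \<zeta>*(\<zeta>*(2*(M+1)+K+H0+\<epsilon>)) + \<epsilon> + M + 1"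
  have DA0: "0 \<le> DA" using DA_def z M0 K0 H00 by simp
  have inI: "\<And>y. \<mu> a y b \<in> I" unfolding I_def median_interval_def by blast
  show "infdist (\<gamma> u) (median_interval \<mu> a b) \<le> DA"
  proof (cases "u = t")
    case True
    have "b \<in> I" using inI[of b] mm2(2)[of a b] by simp
    thus ?thesis using True gb DA0 I_def by simp
  next
    case False
    hence ut: "u < t" using u by simp
    obtain g :: "real \<Rightarrow> 'a" where g0: "g 0 = a" and gl: "g (dist a b) = b"
      and gi: "\<forall>u\<in>{0..dist a b}. \<forall>v\<in>{0..dist a b}. dist (g u) (g v) = \<bar>u - v\<bar>"
      using geod[OF geo, of a b] by blast
    define l where "l = dist a b"
    define N where "N = nat \<lceil>l\<rceil>"
    define q where "q = (\<lambda>j::nat. \<mu> a (g (min (real j) l)) b)"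
    have q0: "q 0 = a" using q_def g0 mm l_def by simp
    have qN: "\<And>j. N \<le> j \<Longrightarrow> q j = b"
    proof -
      fix j assume "N \<le> j"
      hence "min (real j) l = l" using N_def by linarith
      thus "q j = b" using q_def gl l_def mm2(2)[of a b] by simp
    qed
    have qd: "\<And>j. 0 < j \<Longrightarrow> dist (q (j-1)) (q j) \<le> K + H0"
    proof -
      fix j :: nat assume j: "0 < j"
      have l0: "0 \<le> l" using l_def by simp
      have r1: "min (real j) l \<in> {0..dist a b}" "min (real (j-1)) l \<in> {0..dist a b}" using l0 l_def by auto
      have "\<bar>min (real j) l - min (real (j-1)) l\<bar> \<le> 1" using j by (simp add: of_nat_diff)
      hence gd: "dist (g (min (real (j-1)) l)) (g (min (real j) l)) \<le> 1" using gi r1 by (simp add: abs_minus_commute)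
      have "dist (q (j-1)) (q j) \<le> K*(dist a a + dist (g (min (real (j-1)) l)) (g (min (real j) l)) + dist b b) + H0"
        unfolding q_def by (rule lip)
      also have "\<dots> \<le> K*1 + H0" using gd K0 by (simp add: mult_left_le)
      finally show "dist (q (j-1)) (q j) \<le> K + H0" by simp
    qed
    have qI: "\<And>j. q j \<in> I" using q_def inI by simp
    have near: "\<And>j. \<exists>v. v\<in>{s..t} \<and> dist (q j) (\<gamma> v) \<le> M + 1"
    proof -
      fix j
      have "infdist (q j) G < M + 1" using Mb qI[of j] I_def G_def by fastforce
      moreover have "G \<noteq> {}" using st G_def by auto
      ultimately obtain p where "p \<in> G" "dist (q j) p < M + 1" using infdist_near by blast
      thus "\<exists>v. v\<in>{s..t} \<and> dist (q j) (\<gamma> v) \<le> M + 1" using G_def by auto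
    qed
    define v where "v = (\<lambda>j. if j = 0 then s else if N \<le> j then t else (SOME v. v\<in>{s..t} \<and> dist (q j) (\<gamma> v) \<le> M + 1))"
    have vp: "\<And>j. v j \<in> {s..t} \<and> dist (q j) (\<gamma> (v j)) \<le> M + 1"
    proof -
      fix j
      show "v j \<in> {s..t} \<and> dist (q j) (\<gamma> (v j)) \<le> M + 1"
      proof (cases "j = 0")
        case True thus ?thesis using v_def q0 ga st M0 by simp
      next
        case F: False
        show ?thesis
        proof (cases "N \<le> j")
          case True thus ?thesis using v_def qN gb st M0 F by simp
        next
          case False thus ?thesis using v_def F someI_ex[OF near[of j]] by simp
        qed
      qed
    qed
    have vN: "u < v (N+1)" using v_def ut by simp
    define j0 where "j0 = (LEAST j. u < v j)"
    have j0: "u < v j0" using vN j0_def by (metis LeastI)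
    have j00: "j0 \<noteq> 0"
    proof
      assume "j0 = 0" hence "v j0 = s" using v_def by simp
      thus False using j0 u by simp
    qed
    have vj: "v (j0-1) \<le> u" using j0_def j00 not_less_Least[of "j0-1" "\<lambda>j. u < v j"] by (simp add: not_less)
    have vv: "v (j0 - 1) \<in> {s..t}" "v j0 \<in> {s..t}" using vp by auto
    have "dist (\<gamma> (v (j0-1))) (\<gamma> (v j0)) \<le> dist (\<gamma> (v (j0-1))) (q (j0-1)) + dist (q (j0-1)) (q j0) + dist (q j0) (\<gamma> (v j0))"
      by (metis dist_triangle order_trans add_right_mono)
    also have "\<dots> \<le> (M+1) + (K + H0) + (M+1)" using vp[of "j0-1"] vp[of j0] qd[of j0] j00 by (simp add: dist_commute)
    finally have dvv: "dist (\<gamma> (v (j0-1))) (\<gamma> (v j0)) \<le> 2*(M+1) + K + H0" by simp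
    have "\<bar>v (j0-1) - v j0\<bar> \<le> \<zeta>*(dist (\<gamma> (v (j0-1))) (\<gamma> (v j0)) + \<epsilon>)" using qg_low[OF qg vv z(1)] .
    also have "\<dots> \<le> \<zeta>*(2*(M+1) + K + H0 + \<epsilon>)" using dvv z by simp
    finally have uv: "\<bar>u - v (j0-1)\<bar> \<le> \<zeta>*(2*(M+1) + K + H0 + \<epsilon>)" using vj j0 by simp
    have "dist (\<gamma> u) (\<gamma> (v (j0-1))) \<le> \<zeta>*\<bar>u - v (j0-1)\<bar> + \<epsilon>" using qg_up[OF qg u vv(1)] .
    also have "\<dots> \<le> \<zeta>*(\<zeta>*(2*(M+1) + K + H0 + \<epsilon>)) + \<epsilon>" using uv z by simp
    finally have "dist (\<gamma> u) (q (j0-1)) \<le> \<zeta>*(\<zeta>*(2*(M+1) + K + H0 + \<epsilon>)) + \<epsilon> + (M + 1)"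
      using vp[of "j0-1"] dist_triangle[of "\<gamma> u" "q (j0-1)" "\<gamma> (v (j0-1))"] by (simp add: dist_commute)
    hence "infdist (\<gamma> u) I \<le> DA" using infdist_le[OF qI[of "j0-1"], of "\<gamma> u"] DA_def by simp
    thus ?thesis using I_def by simp
  qed
qed

end

theorem theorem4p2:
  fixes \<mu> :: "'a::metric_space \<Rightarrow> 'a \<Rightarrow> 'a \<Rightarrow> 'a"
  assumes "coarse_median_rank \<mu> 1"
    and "geodesic_space TYPE('a)"
  shows "\<forall>\<zeta> \<epsilon>. \<zeta> > 0 \<and> \<epsilon> > 0 \<longrightarrow>
           (\<exists>D::real. \<forall>a b s t (\<gamma>::real \<Rightarrow> 'a).
              s \<le> t \<and> quasi_geodesic \<zeta> \<epsilon> s t \<gamma> \<and> \<gamma> s = a \<and> \<gamma> t = b \<longrightarrow>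
              hausdorff_distance (median_interval \<mu> a b) (\<gamma> ` {s..t}) < ereal D)"
proof (intro allI impI)
  fix \<zeta> \<epsilon> :: real assume ze: "\<zeta> > 0 \<and> \<epsilon> > 0"
  hence z: "0 < \<zeta>" "0 < \<epsilon>" by auto
  have cm1: "coarse_median_rank_le \<mu> 1" using assms(1) unfolding coarse_median_rank_def by blast
  have D: "(\<forall>a b. \<mu> a a b = a) \<and>
     (\<forall>a b c. \<mu> a b c = \<mu> b a c \<and> \<mu> a b c = \<mu> a c b \<and> \<mu> a b c = \<mu> b c a) \<and>
     (\<exists>K H0 (H :: nat \<Rightarrow> real).
        (\<forall>p. H p \<ge> 0) \<and>
        (\<forall>a b c a' b' c'. dist (\<mu> a b c) (\<mu> a' b' c')
              \<le> K * (dist a a' + dist b b' + dist c c') + H0) \<and>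
        (\<forall>p A. finite A \<and> 1 \<le> card A \<and> card A \<le> p \<longrightarrow>
           (\<exists>(P :: nat set) m \<pi> lam. finite P \<and> median_algebra_on P m \<and> median_rank_le P m 1 \<and>
              \<pi> ` A \<subseteq> P \<and>
              (\<forall>x\<in>P. \<forall>y\<in>P. \<forall>z\<in>P. dist (lam (m x y z)) (\<mu> (lam x) (lam y) (lam z)) \<le> H p) \<and>
              (\<forall>a\<in>A. dist (lam (\<pi> a)) a \<le> H p))))"
    using cm1 unfolding coarse_median_rank_le_def .
  have M1: "\<And>a b. \<mu> a a b = a" using conjunct1[OF D] by blast
  have M2: "\<And>a b c. \<mu> a b c = \<mu> b a c \<and> \<mu> a b c = \<mu> a c b \<and> \<mu> a b c = \<mu> b c a"
    using conjunct1[OF conjunct2[OF D]] by blast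
  obtain K H0 and H :: "nat \<Rightarrow> real" where Hnn: "\<forall>p. H p \<ge> 0"
    and lip: "\<forall>a b c a' b' c'. dist (\<mu> a b c) (\<mu> a' b' c') \<le> K * (dist a a' + dist b b' + dist c c') + H0"
    and apx: "\<forall>p A. finite A \<and> 1 \<le> card A \<and> card A \<le> p \<longrightarrow>
           (\<exists>(P :: nat set) m \<pi> lam. finite P \<and> median_algebra_on P m \<and> median_rank_le P m 1 \<and>
              \<pi> ` A \<subseteq> P \<and>
              (\<forall>x\<in>P. \<forall>y\<in>P. \<forall>z\<in>P. dist (lam (m x y z)) (\<mu> (lam x) (lam y) (lam z)) \<le> H p) \<and>
              (\<forall>a\<in>A. dist (lam (\<pi> a)) a \<le> H p))"
    using conjunct2[OF conjunct2[OF D]] by (elim exE conjE) (rule that; assumption)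
  have lip': "\<And>a b c a' b' c'. dist (\<mu> a b c) (\<mu> a' b' c') \<le> \<bar>K\<bar> * (dist a a' + dist b b' + dist c c') + H0"
  proof -
    fix a b c a' b' c' :: 'a
    have "K * (dist a a' + dist b b' + dist c c') \<le> \<bar>K\<bar> * (dist a a' + dist b b' + dist c c')"
      by (intro mult_right_mono) auto
    thus "dist (\<mu> a b c) (\<mu> a' b' c') \<le> \<bar>K\<bar> * (dist a a' + dist b b' + dist c c') + H0"
      using lip[rule_format, of a b c a' b' c'] by linarith
  qed
  have H00: "0 \<le> H0" using lip'[of undefined undefined undefined undefined undefined undefined] by simp
  interpret cm \<mu> "\<bar>K\<bar>" H0 H
  proof
    show "\<And>a b. \<mu> a a b = a" by (rule M1)
    show "\<And>a b c. \<mu> a b c = \<mu> b a c" using M2 by blast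
    show "\<And>a b c. \<mu> a b c = \<mu> a c b" using M2 by blast
    show "0 \<le> \<bar>K\<bar>" by simp
    show "0 \<le> H0" by (rule H00)
    show "\<And>a b c a' b' c'. dist (\<mu> a b c) (\<mu> a' b' c') \<le> \<bar>K\<bar> * (dist a a' + dist b b' + dist c c') + H0" by (rule lip')
    show "\<And>p. 0 \<le> H p" using Hnn by blast
    show "\<And>p A. finite A \<Longrightarrow> 1 \<le> card A \<Longrightarrow> card A \<le> p \<Longrightarrow>
     \<exists>(P::nat set) m \<pi> lam. median_algebra_on P m \<and> median_rank_le P m 1 \<and> \<pi> ` A \<subseteq> P \<and>
       (\<forall>x\<in>P. \<forall>y\<in>P. \<forall>z\<in>P. dist (lam (m x y z)) (\<mu> (lam x) (lam y) (lam z)) \<le> H p) \<and>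
       (\<forall>a\<in>A. dist (lam (\<pi> a)) a \<le> H p)"
    proof -
      fix p A assume h: "finite (A::'a set)" "1 \<le> card A" "card A \<le> p"
      then obtain P m \<pi> lam where X: "finite (P::nat set) \<and> median_algebra_on P m \<and> median_rank_le P m 1 \<and>
              \<pi> ` A \<subseteq> P \<and>
              (\<forall>x\<in>P. \<forall>y\<in>P. \<forall>z\<in>P. dist (lam (m x y z)) (\<mu> (lam x) (lam y) (lam z)) \<le> H p) \<and>
              (\<forall>a\<in>A. dist (lam (\<pi> a)) a \<le> H p)"
        using apx[rule_format, OF conjI[OF h(1) conjI[OF h(2) h(3)]]] by (elim exE) (rule that; assumption)
      show "\<exists>(P::nat set) m \<pi> lam. median_algebra_on P m \<and> median_rank_le P m 1 \<and> \<pi> ` A \<subseteq> P \<and>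
       (\<forall>x\<in>P. \<forall>y\<in>P. \<forall>z\<in>P. dist (lam (m x y z)) (\<mu> (lam x) (lam y) (lam z)) \<le> H p) \<and>
       (\<forall>a\<in>A. dist (lam (\<pi> a)) a \<le> H p)"
        apply (rule exI[where x=P], rule exI[where x=m], rule exI[where x=\<pi>], rule exI[where x=lam])
        using X by simp
    qed
  qed
  obtain Cr where Cr0: "0 \<le> Cr" and Cr: "\<forall>a b c y. dist (\<mu> a y b) (\<mu> a (\<mu> a y b) c) \<le> Cr \<or> dist (\<mu> a y b) (\<mu> c (\<mu> a y b) b) \<le> Cr"
    using cR1 by blast
  obtain C2 where C20: "0 \<le> C2" and C2: "\<forall>a b y y'. dist (\<mu> a y' (\<mu> a y b)) (\<mu> a (\<mu> a y' (\<mu> a y b)) b) \<le> C2"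
    using cConv by blast
  obtain C3 where C30: "0 \<le> C3" and C3: "\<forall>a b w w' w''. dist (\<mu> a w b) (\<mu> (\<mu> a w' (\<mu> a w b)) (\<mu> a w b) (\<mu> (\<mu> a w b) w'' b)) \<le> C3"
    using cMed1 by blast
  obtain M where M0: "0 \<le> M" and MB: "\<forall>a b s t \<gamma>. s \<le> t \<and> quasi_geodesic \<zeta> \<epsilon> s t \<gamma> \<and> \<gamma> s = a \<and> \<gamma> t = b \<longrightarrow>
            (\<forall>x\<in>median_interval \<mu> a b. infdist x (\<gamma>`{s..t}) \<le> M)"
    using partB[OF assms(2) Cr0 Cr C20 C2 C30 C3 z] by blast
  define DA where "DA = \<zeta>*(\<zeta>*(2*(M+1)+\<bar>K\<bar>+H0+\<epsilon>)) + \<epsilon> + M + 1"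
  show "\<exists>D::real. \<forall>a b s t (\<gamma>::real \<Rightarrow> 'a).
              s \<le> t \<and> quasi_geodesic \<zeta> \<epsilon> s t \<gamma> \<and> \<gamma> s = a \<and> \<gamma> t = b \<longrightarrow>
              hausdorff_distance (median_interval \<mu> a b) (\<gamma> ` {s..t}) < ereal D"
  proof (intro exI[of _ "max M DA + 1"] allI impI)
    fix a b :: 'a and s t :: real and \<gamma> :: "real \<Rightarrow> 'a"
    assume h: "s \<le> t \<and> quasi_geodesic \<zeta> \<epsilon> s t \<gamma> \<and> \<gamma> s = a \<and> \<gamma> t = b"
    have B: "\<forall>x\<in>median_interval \<mu> a b. infdist x (\<gamma>`{s..t}) \<le> M" using MB h by blast
    have A: "\<forall>u\<in>{s..t}. infdist (\<gamma> u) (median_interval \<mu> a b) \<le> DA"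
      using partA[OF assms(2) z M0 _ _ _ _ B] h DA_def by blast
    have s1: "(SUP x\<in>median_interval \<mu> a b. ereal (infdist x (\<gamma>`{s..t}))) \<le> ereal (max M DA)"
      by (rule SUP_least) (use B in \<open>auto simp: le_max_iff_disj\<close>)
    have s2: "(SUP y\<in>\<gamma>`{s..t}. ereal (infdist y (median_interval \<mu> a b))) \<le> ereal (max M DA)"
      by (rule SUP_least) (use A in \<open>auto simp: le_max_iff_disj\<close>)
    have "hausdorff_distance (median_interval \<mu> a b) (\<gamma> ` {s..t}) \<le> ereal (max M DA)"
      unfolding hausdorff_distance_def using s1 s2 by simp
    also have "\<dots> < ereal (max M DA + 1)" by (simp del: max_def) (simp add: max_def)
    finally show "hausdorff_distance (median_interval \<mu> a b) (\<gamma> ` {s..t}) < ereal (max M DA + 1)" .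
  qed
qed


end
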